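(* Let $(X,\rho)$ be a metric space, $f:X\to X$ continuous, $x\in X$, $\ell\in\mathbb N$, $n\ge2$ an integer and $\varepsilon>0$. Then \[ \mathrm{RR}_\ell(x,n,\varepsilon)=\frac{n}{n-1}\Big[\ell\,C_\ell(x,n,\varepsilon)-(\ell-1)C_{\ell+1}(x,n,\varepsilon)\Big]-\frac1{n-1}+\delta^{\mathrm{RR}}_\ell, \qquad |\delta^{\mathrm{RR}}_\ell|\le\frac{2\ell(\ell-1)}{n}. \]
   Context: Bowen metric $\rho_\ell(y,z)=\max_{0\le i<\ell}\rho(f^iy,f^iz)$; correlation sum $C_\ell(x,n,\varepsilon)=n^{-2}\#\{(i,j):0\le i,j<n,\ \rho_\ell(f^ix,f^jx)\le\varepsilon\}$. Recurrence plot $R(x,n,\varepsilon)$: $n\times n$ matrix ($0\le i,j<n$) with entry $1$ iff $\rho(f^ix,f^jx)\le\varepsilon$. A line of length $\ell$: triple $(i,j,\ell)$ with $0\le i,j\le n-\ell$, $i\ne j$, entries $(i+k,j+k)=1$ for $0\le k<\ell$, entry $(i-1,j-1)=0$ if $\min\{i,j\}>0$, entry $(i+\ell,j+\ell)=0$ if $\max\{i,j\}<n-\ell$. $N_l$ = number of lines of length exactly $l$ (boundary lines included), $\lambda_l=N_l/(n^2-n)$, recurrence rate $\mathrm{RR}_\ell(x,n,\varepsilon)=\sum_{l\ge\ell}l\lambda_l$. *)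

theory Defs
  imports "HOL-Analysis.Analysis"
begin

text \<open>Bowen metric rho_l(y,z) = max over 0 <= i < l of dist (f^i y) (f^i z) (meaningful for l >= 1).\<close>
definition bowen :: "('a::metric_space \<Rightarrow> 'a) \<Rightarrow> nat \<Rightarrow> 'a \<Rightarrow> 'a \<Rightarrow> real" where
  "bowen f l y z = Max ((\<lambda>i. dist ((f ^^ i) y) ((f ^^ i) z)) ` {0..<l})"

definition corr_sum :: "('a::metric_space \<Rightarrow> 'a) \<Rightarrow> nat \<Rightarrow> 'a \<Rightarrow> nat \<Rightarrow> real \<Rightarrow> real" where
  "corr_sum f l x n eps =
     real (card {(i, j). i < n \<and> j < n \<and> bowen f l ((f ^^ i) x) ((f ^^ j) x) \<le> eps}) / (real n)^2"

definition rp_entry :: "('a::metric_space \<Rightarrow> 'a) \<Rightarrow> 'a \<Rightarrow> real \<Rightarrow> nat \<Rightarrow> nat \<Rightarrow> bool" where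
  "rp_entry f x eps i j \<longleftrightarrow> dist ((f ^^ i) x) ((f ^^ j) x) \<le> eps"

definition is_line :: "('a::metric_space \<Rightarrow> 'a) \<Rightarrow> 'a \<Rightarrow> nat \<Rightarrow> real \<Rightarrow> nat \<Rightarrow> nat \<Rightarrow> nat \<Rightarrow> bool" where
  "is_line f x n eps i j l \<longleftrightarrow>
     i + l \<le> n \<and> j + l \<le> n \<and> i \<noteq> j \<and>
     (\<forall>k<l. rp_entry f x eps (i + k) (j + k)) \<and>
     (min i j > 0 \<longrightarrow> \<not> rp_entry f x eps (i - 1) (j - 1)) \<and>
     (max i j < n - l \<longrightarrow> \<not> rp_entry f x eps (i + l) (j + l))"

definition num_lines :: "('a::metric_space \<Rightarrow> 'a) \<Rightarrow> 'a \<Rightarrow> nat \<Rightarrow> real \<Rightarrow> nat \<Rightarrow> nat" where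
  "num_lines f x n eps l = card {(i, j). i < n \<and> j < n \<and> is_line f x n eps i j l}"

text \<open>RR_l(x,n,eps) = sum over l' >= l of l' * N_l' / (n^2 - n); lines have length at most n.\<close>
definition rec_rate :: "('a::metric_space \<Rightarrow> 'a) \<Rightarrow> nat \<Rightarrow> 'a \<Rightarrow> nat \<Rightarrow> real \<Rightarrow> real" where
  "rec_rate f l x n eps =
     (\<Sum>l'\<in>{l..n}. real l' * (real (num_lines f x n eps l') / ((real n)^2 - real n)))"

end

theory Submission
  imports Defs
begin

definition win :: "('a::metric_space \<Rightarrow> 'a) \<Rightarrow> 'a \<Rightarrow> real \<Rightarrow> nat \<Rightarrow> nat \<Rightarrow> nat \<Rightarrow> bool" where
  "win f x eps L i j \<longleftrightarrow> (\<forall>k<L. rp_entry f x eps (i+k) (j+k))"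

definition QS :: "('a::metric_space \<Rightarrow> 'a) \<Rightarrow> 'a \<Rightarrow> nat \<Rightarrow> real \<Rightarrow> nat \<Rightarrow> (nat \<times> nat) set" where
  "QS f x n eps L = {(i,j). i<n \<and> j<n \<and> i\<noteq>j \<and> i+L \<le> n \<and> j+L \<le> n \<and> win f x eps L i j}"

lemma win_mono: "L \<le> M \<Longrightarrow> win f x eps M i j \<Longrightarrow> win f x eps L i j"
  unfolding win_def by auto

lemma win_Suc_left: "win f x eps (Suc L) a b \<longleftrightarrow> rp_entry f x eps a b \<and> win f x eps L (Suc a) (Suc b)"
  unfolding win_def by (simp add: All_less_Suc2)

lemma win_Suc_right: "win f x eps (Suc L) a b \<longleftrightarrow> win f x eps L a b \<and> rp_entry f x eps (a+L) (b+L)"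
  unfolding win_def by (auto simp add: All_less_Suc)

lemma QS_finite: "finite (QS f x n eps L)"
  by (rule finite_subset[of _ "{..<n} \<times> {..<n}"]) (auto simp: QS_def)

lemma sum_parts:
  fixes q :: "nat \<Rightarrow> real"
  assumes "\<And>L. L > n \<Longrightarrow> q L = 0"
  shows "(\<Sum>L\<in>{l..n}. real L * (q L - 2*q(L+1) + q(L+2))) = real l * q l - (real l - 1) * q (l+1)"
proof (cases "l \<le> n+1")
  case True
  show ?thesis using True
  proof (induction l rule: inc_induct)
    case base
    then show ?case using assms by simp
  next
    case (step m)
    have "{m..n} = insert m {Suc m..n}" using step by auto
    then have "(\<Sum>L\<in>{m..n}. real L * (q L - 2*q(L+1) + q(L+2)))
       = real m * (q m - 2*q(m+1) + q(m+2)) + (\<Sum>L\<in>{Suc m..n}. real L * (q L - 2*q(L+1) + q(L+2)))"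
      by simp
    also have "\<dots> = real m * q m - (real m - 1) * q (m+1)"
      using step(3) by (simp add: algebra_simps)
    finally show ?case .
  qed
next
  case False
  then show ?thesis using assms by simp
qed

lemma lines_set:
  assumes "L \<ge> 1"
  shows "{(i,j). i<n \<and> j<n \<and> is_line f x n eps i j L}
     = QS f x n eps L - ((\<lambda>(a,b). (a+1,b+1)) ` QS f x n eps (L+1) \<union> QS f x n eps (L+1))"
proof (intro set_eqI iffI)
  fix p assume p: "p \<in> {(i,j). i<n \<and> j<n \<and> is_line f x n eps i j L}"
  obtain i j where ij: "p = (i,j)" by fastforce
  have l: "i<n" "j<n" "is_line f x n eps i j L" using p ij by auto
  have q: "(i,j) \<in> QS f x n eps L" using l unfolding QS_def is_line_def win_def by auto
  have nr: "(i,j) \<notin> QS f x n eps (L+1)"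
    using l unfolding QS_def is_line_def by (auto simp: win_Suc_right)
  have nl: "(i,j) \<notin> (\<lambda>(a,b). (a+1,b+1)) ` QS f x n eps (L+1)"
  proof
    assume "(i,j) \<in> (\<lambda>(a,b). (a+1,b+1)) ` QS f x n eps (L+1)"
    then obtain a b where ab: "(a,b) \<in> QS f x n eps (L+1)" "i = a+1" "j = b+1" by auto
    then have "rp_entry f x eps a b" unfolding QS_def by (auto simp: win_Suc_left)
    then show False using l ab unfolding is_line_def by auto
  qed
  show "p \<in> QS f x n eps L - ((\<lambda>(a,b). (a+1,b+1)) ` QS f x n eps (L+1) \<union> QS f x n eps (L+1))"
    using q nr nl ij by auto
next
  fix p assume p: "p \<in> QS f x n eps L - ((\<lambda>(a,b). (a+1,b+1)) ` QS f x n eps (L+1) \<union> QS f x n eps (L+1))"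
  obtain i j where ij: "p = (i,j)" by fastforce
  have q: "(i,j) \<in> QS f x n eps L" and nr: "(i,j) \<notin> QS f x n eps (L+1)"
    and nl: "(i,j) \<notin> (\<lambda>(a,b). (a+1,b+1)) ` QS f x n eps (L+1)" using p ij by auto
  have w: "win f x eps L i j" "i<n" "j<n" "i\<noteq>j" "i+L\<le>n" "j+L\<le>n" using q unfolding QS_def by auto
  have left: "\<not> rp_entry f x eps (i - 1) (j - 1)" if "min i j > 0"
  proof
    assume r: "rp_entry f x eps (i - 1) (j - 1)"
    have "(i-1, j-1) \<in> QS f x n eps (L+1)"
      using that w r unfolding QS_def by (auto simp: win_Suc_left)
    then have "(i-1+1, j-1+1) \<in> (\<lambda>(a,b). (a+1,b+1)) ` QS f x n eps (L+1)" by force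
    then show False using nl that by simp
  qed
  have right: "\<not> rp_entry f x eps (i + L) (j + L)" if "max i j < n - L"
  proof
    assume r: "rp_entry f x eps (i + L) (j + L)"
    have "(i, j) \<in> QS f x n eps (L+1)"
      using that w r unfolding QS_def by (auto simp: win_Suc_right)
    then show False using nr by simp
  qed
  show "p \<in> {(i,j). i<n \<and> j<n \<and> is_line f x n eps i j L}"
    using ij w left right unfolding is_line_def win_def by auto
qed

lemma num_lines_eq:
  assumes "L \<ge> 1"
  shows "real (num_lines f x n eps L) = real (card (QS f x n eps L)) - 2 * real (card (QS f x n eps (L+1)))
        + real (card (QS f x n eps (L+2)))"
proof -
  define sh where "sh = (\<lambda>(a::nat,b::nat). (a+1,b+1))"
  define A where "A = sh ` QS f x n eps (L+1)"
  define R where "R = QS f x n eps (L+1)"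
  have inj: "inj sh" unfolding sh_def inj_def by auto
  have cA: "card A = card R" unfolding A_def R_def by (rule card_image[OF inj_on_subset[OF inj]]) auto
  have AR: "A \<inter> R = sh ` QS f x n eps (L+2)"
  proof (intro set_eqI iffI)
    fix p assume "p \<in> A \<inter> R"
    then obtain a b where ab: "(a,b) \<in> QS f x n eps (L+1)" "p = (a+1,b+1)" "(a+1,b+1) \<in> QS f x n eps (L+1)"
      unfolding A_def R_def sh_def by auto
    then have "(a,b) \<in> QS f x n eps (L+2)" unfolding QS_def
      by (auto simp: win_Suc_left)
    then show "p \<in> sh ` QS f x n eps (L+2)" using ab unfolding sh_def by force
  next
    fix p assume "p \<in> sh ` QS f x n eps (L+2)"
    then obtain a b where ab: "(a,b) \<in> QS f x n eps (L+2)" "p = (a+1,b+1)" unfolding sh_def by auto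
    have w: "win f x eps (Suc (Suc L)) a b" using ab unfolding QS_def by auto
    have "(a,b) \<in> QS f x n eps (L+1)" using ab w win_mono[of "Suc L" "Suc (Suc L)"] unfolding QS_def by auto
    moreover have "(a+1,b+1) \<in> QS f x n eps (L+1)" using ab w unfolding QS_def
      by (auto simp: win_Suc_left[of _ _ _ "Suc L"])
    ultimately show "p \<in> A \<inter> R" using ab unfolding A_def R_def sh_def by force
  qed
  have cAR: "card (A \<inter> R) = card (QS f x n eps (L+2))"
    unfolding AR by (rule card_image[OF inj_on_subset[OF inj]]) auto
  have sub: "A \<union> R \<subseteq> QS f x n eps L"
  proof
    fix p assume "p \<in> A \<union> R"
    then show "p \<in> QS f x n eps L"
    proof
      assume "p \<in> A"
      then obtain a b where ab: "(a,b) \<in> QS f x n eps (L+1)" "p = (a+1,b+1)" unfolding A_def sh_def by auto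
      then show ?thesis using assms unfolding QS_def by (auto simp: win_Suc_left)
    next
      assume "p \<in> R" then show ?thesis unfolding R_def QS_def using win_mono[of L "L+1"] by auto
    qed
  qed
  have fin: "finite (A \<union> R)" using sub QS_finite finite_subset by blast
  have "num_lines f x n eps L = card (QS f x n eps L - (A \<union> R))"
    unfolding num_lines_def lines_set[OF assms] A_def R_def sh_def by simp
  also have "\<dots> = card (QS f x n eps L) - card (A \<union> R)"
    using sub fin by (simp add: card_Diff_subset)
  finally have nl: "num_lines f x n eps L = card (QS f x n eps L) - card (A \<union> R)" .
  have e1: "real (num_lines f x n eps L) = real (card (QS f x n eps L)) - real (card (A \<union> R))"
  proof -
    have "card (A \<union> R) \<le> card (QS f x n eps L)" using sub QS_finite by (rule card_mono[rotated])
    then show ?thesis using nl by (simp add: of_nat_diff)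
  qed
  have "card (A \<union> R) + card (A \<inter> R) = card A + card R"
    using fin by (metis card_Un_Int finite_Un)
  then show ?thesis using e1 cA cAR unfolding R_def by linarith
qed

lemma bowen_win:
  assumes "l \<ge> 1"
  shows "bowen f l ((f^^i) x) ((f^^j) x) \<le> eps \<longleftrightarrow> win f x eps l i j"
proof -
  have e: "\<And>k i. (f^^k) ((f^^i) x) = (f^^(i+k)) x" by (metis comp_apply funpow_add add.commute)
  have ne: "{0..<l} \<noteq> {}" using assms by auto
  show ?thesis unfolding bowen_def win_def rp_entry_def
    using ne by (simp add: Max_le_iff e atLeast0LessThan) (simp add: lessThan_def)
qed

definition BS :: "('a::metric_space \<Rightarrow> 'a) \<Rightarrow> 'a \<Rightarrow> nat \<Rightarrow> real \<Rightarrow> nat \<Rightarrow> (nat \<times> nat) set" where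
  "BS f x n eps L = {(i,j). i<n \<and> j<n \<and> i\<noteq>j \<and> \<not>(i+L \<le> n \<and> j+L \<le> n) \<and> win f x eps L i j}"

lemma corr_card:
  assumes "l \<ge> 1" "eps > 0"
  shows "corr_sum f l x n eps * (real n)^2 = real n + real (card (QS f x n eps l)) + real (card (BS f x n eps l))"
proof -
  define D where "D = (\<lambda>i. (i,i)) ` {..<n}"
  have set: "{(i, j). i < n \<and> j < n \<and> bowen f l ((f ^^ i) x) ((f ^^ j) x) \<le> eps}
      = D \<union> QS f x n eps l \<union> BS f x n eps l"
    using assms unfolding D_def QS_def BS_def bowen_win[OF assms(1)]
    by (auto simp: win_def rp_entry_def)
  have fD: "finite D" unfolding D_def by auto
  have fB: "finite (BS f x n eps l)"
    by (rule finite_subset[of _ "{..<n} \<times> {..<n}"]) (auto simp: BS_def)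
  have cD: "card D = n" unfolding D_def by (subst card_image) (auto simp: inj_on_def)
  have "card (D \<union> QS f x n eps l \<union> BS f x n eps l) = card D + card (QS f x n eps l) + card (BS f x n eps l)"
  proof -
    have d1: "D \<inter> QS f x n eps l = {}" unfolding D_def QS_def by auto
    have d2: "(D \<union> QS f x n eps l) \<inter> BS f x n eps l = {}" unfolding D_def QS_def BS_def by auto
    have fQ: "finite (QS f x n eps l)" by (rule QS_finite)
    show ?thesis using fD fB fQ d1 d2
      by (simp add: card_Un_disjoint)
  qed
  then have c: "real (card {(i, j). i < n \<and> j < n \<and> bowen f l ((f ^^ i) x) ((f ^^ j) x) \<le> eps})
     = real n + real (card (QS f x n eps l)) + real (card (BS f x n eps l))"
    unfolding set cD by simp
  show ?thesis
  proof (cases "n = 0")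
    case True
    then have "QS f x n eps l = {}" "BS f x n eps l = {}" unfolding QS_def BS_def by auto
    then show ?thesis using True by simp
  next
    case False
    then show ?thesis unfolding corr_sum_def c by simp
  qed
qed

lemma BS_card:
  assumes "l \<ge> 1" "n \<ge> 1"
  shows "real (card (BS f x n eps l)) \<le> 2 * (real l - 1) * (real n - 1)"
proof -
  define I where "I = {i. i<n \<and> n < i+l}"
  define T where "T = Sigma I (\<lambda>i. {..<n} - {i})"
  define sw where "sw = (\<lambda>(a::nat,b::nat). (b,a))"
  have fI: "finite I" unfolding I_def by auto
  have cI: "card I \<le> l - 1"
  proof -
    have "I \<subseteq> {n+1-l..<n}" unfolding I_def by auto
    then have "card I \<le> card {n+1-l..<n}" by (rule card_mono[rotated]) auto
    then show ?thesis by simp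
  qed
  have cT: "card T = card I * (n - 1)"
  proof -
    have "card T = (\<Sum>i\<in>I. card ({..<n} - {i}))" unfolding T_def using fI by (simp add: card_SigmaI)
    also have "\<dots> = (\<Sum>i\<in>I. n - 1)" by (rule sum.cong) (auto simp: I_def)
    finally show ?thesis by simp
  qed
  have fT: "finite T" unfolding T_def using fI by auto
  have sub: "BS f x n eps l \<subseteq> T \<union> sw ` T" unfolding BS_def T_def I_def sw_def by force
  have "card (BS f x n eps l) \<le> card (T \<union> sw ` T)" using sub fT by (intro card_mono) auto
  also have "\<dots> \<le> card T + card (sw ` T)" by (rule card_Un_le)
  also have "\<dots> \<le> card T + card T" using card_image_le[OF fT, of sw] by simp
  finally have "card (BS f x n eps l) \<le> 2 * ((l - 1) * (n - 1))"
    using cT cI mult_le_mono1[OF cI, of "n-1"] by linarith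
  then have "real (card (BS f x n eps l)) \<le> 2 * (real (l - 1) * real (n - 1))"
    by (metis of_nat_le_iff of_nat_mult of_nat_numeral)
  moreover have "real (l - 1) = real l - 1" "real (n - 1) = real n - 1" using assms by auto
  ultimately show ?thesis by (simp add: algebra_simps)
qed

lemma alg: fixes N L q1 q2 e1 e2 :: real assumes "N \<ge> 2"
 shows "(L * q1 - (L - 1) * q2) / (N * (N - 1)) =
   N / (N - 1) * (L * ((N + q1 + e1) / N^2) - (L - 1) * ((N + q2 + e2) / N^2)) - 1 / (N - 1)
   + - (L * e1 - (L - 1) * e2) / (N * (N - 1))"
proof -
  have a: "N \<noteq> 0" "N - 1 \<noteq> 0" using assms by auto
  have "N / (N - 1) * (L * ((N + q1 + e1) / N^2) - (L - 1) * ((N + q2 + e2) / N^2))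
      = (L * (N + q1 + e1) - (L - 1) * (N + q2 + e2)) / (N * (N - 1))"
    using a by (simp add: field_simps power2_eq_square)
  moreover have "1 / (N - 1) = N / (N * (N-1))" using a by simp
  ultimately show ?thesis by (simp add: diff_divide_distrib[symmetric] add_divide_distrib[symmetric] algebra_simps)
qed

theorem mainTheorem7:
  fixes f :: "'a::metric_space \<Rightarrow> 'a" and x :: 'a and l n :: nat and eps :: real
  assumes "continuous_on UNIV f" and "l \<ge> 1" and "n \<ge> 2" and "eps > 0"
  shows "\<exists>\<delta>. rec_rate f l x n eps =
             real n / (real n - 1) * (real l * corr_sum f l x n eps
                                      - (real l - 1) * corr_sum f (l + 1) x n eps)
             - 1 / (real n - 1) + \<delta>
           \<and> \<bar>\<delta>\<bar> \<le> 2 * real l * (real l - 1) / real n"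
proof -
  define q where "q L = real (card (QS f x n eps L))" for L
  define e where "e L = real (card (BS f x n eps L))" for L
  have q0: "q L = 0" if "L > n" for L
  proof -
    have "QS f x n eps L = {}" using that unfolding QS_def by auto
    then show ?thesis unfolding q_def by simp
  qed
  have sumL: "(\<Sum>L\<in>{l..n}. real L * real (num_lines f x n eps L))
      = real l * q l - (real l - 1) * q (l+1)"
  proof -
    have "(\<Sum>L\<in>{l..n}. real L * real (num_lines f x n eps L))
        = (\<Sum>L\<in>{l..n}. real L * (q L - 2*q(L+1) + q(L+2)))"
      using assms(2) by (intro sum.cong) (auto simp: num_lines_eq q_def)
    also have "\<dots> = real l * q l - (real l - 1) * q (l+1)"
      by (rule sum_parts) (rule q0)
    finally show ?thesis .
  qed
  have nn: "real n \<ge> 2" using assms by simp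
  have nz: "(real n)^2 - real n = real n * (real n - 1)" by (simp add: power2_eq_square algebra_simps)
  have rr: "rec_rate f l x n eps = (real l * q l - (real l - 1) * q (l+1)) / (real n * (real n - 1))"
    unfolding rec_rate_def nz sumL[symmetric] sum_divide_distrib
    by (simp add: times_divide_eq_right)
  have n2: "(real n)^2 > 0" using nn by simp
  have c1: "corr_sum f l x n eps = (real n + q l + e l) / (real n)^2"
    using corr_card[OF assms(2) assms(4), of f x n] n2 unfolding q_def e_def
    by (simp add: field_simps)
  have c2: "corr_sum f (l+1) x n eps = (real n + q (l+1) + e (l+1)) / (real n)^2"
    using corr_card[OF _ assms(4), of "l+1" f x n] n2 unfolding q_def e_def
    by (simp add: field_simps)
  have e1: "0 \<le> e l" "e l \<le> 2 * (real l - 1) * (real n - 1)"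
    using BS_card[OF assms(2), of n f x eps] assms unfolding e_def by auto
  have e2: "0 \<le> e (l+1)" "e (l+1) \<le> 2 * real l * (real n - 1)"
    using BS_card[of "l+1" n f x eps] assms unfolding e_def by auto
  define \<delta> where "\<delta> = - (real l * e l - (real l - 1) * e (l+1)) / (real n * (real n - 1))"
  have eq: "rec_rate f l x n eps =
             real n / (real n - 1) * (real l * corr_sum f l x n eps
                                      - (real l - 1) * corr_sum f (l + 1) x n eps)
             - 1 / (real n - 1) + \<delta>"
    unfolding rr c1 c2 \<delta>_def using alg[OF nn] by simp
  have l1: "real l - 1 \<ge> 0" using assms by simp
  have b1: "real l * e l \<le> real l * (2 * (real l - 1) * (real n - 1))"
    using e1 by (intro mult_left_mono) auto
  have b2: "(real l - 1) * e (l+1) \<le> (real l - 1) * (2 * real l * (real n - 1))"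
    using e2 l1 by (intro mult_left_mono) auto
  have p1: "0 \<le> real l * e l" using e1 by simp
  have p2: "0 \<le> (real l - 1) * e (l+1)" using e2 l1 by simp
  have num: "\<bar>real l * e l - (real l - 1) * e (l+1)\<bar> \<le> 2 * real l * (real l - 1) * (real n - 1)"
    using b1 b2 p1 p2 by (simp add: abs_le_iff algebra_simps)
  have den: "real n * (real n - 1) > 0" using nn by simp
  have "\<bar>\<delta>\<bar> = \<bar>real l * e l - (real l - 1) * e (l+1)\<bar> / (real n * (real n - 1))"
    unfolding \<delta>_def using den by (simp add: abs_divide abs_minus_commute)
  also have "\<dots> \<le> 2 * real l * (real l - 1) * (real n - 1) / (real n * (real n - 1))"
    using num den by (intro divide_right_mono) auto
  also have "\<dots> = 2 * real l * (real l - 1) / real n" using nn by (simp add: field_simps)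
  finally show ?thesis using eq by blast
qed

end
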